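(* The prescription assigning (a) an object $\mathcal{H}_E[l]=\mathcal{H}_1{}^{\otimes l}$ of $\mathsf{HH}$ for every $l\in\mathbb{N}$ and (b) a morphism $\mathcal{H}_Ef:\mathcal{H}_E[l]\to\mathcal{H}_E[m]$ given by $\mathcal{H}_Ef\,|x\rangle=|Ef(x)\rangle$ with $x\in E[l]$, for every $l,m\in\mathbb{N}$ and $f\in\mathrm{Hom}_\Omega([l],[m])$, specifies a functor $\mathcal{H}_E:\Omega\rightarrow\mathsf{HH}$ injective on objects and morphisms. Therefore, there exists an $\Omega$ category $\mathcal{H}_E\Omega$ having the functor $\mathcal{H}_E$ with the target category $\mathsf{HH}$ restricted to $\mathcal{H}_E\Omega$ as its stalk isofunctor. Further, $\mathcal{H}_E\Omega$ is a non monoidal subcategory of $\mathsf{HH}$.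
   Context: $\mathsf{HH}$ denotes the category of finite dimensional Hilbert spaces and linear maps. $\mathsf{R}$ is an additive finite commutative monoid with $\mathsf{R}\neq0$, and $\mathcal{H}_1$ is a Hilbert space with a distinguished orthonormal basis $|z\rangle_1$, $z\in\mathsf{R}$; $\mathcal{H}_E[0]=\mathbb{C}$, and for $x\in\mathsf{R}^l$, $|x\rangle=|x_1\rangle_1\otimes\cdots\otimes|x_l\rangle_1$ is the induced orthonormal basis of $\mathcal{H}_1{}^{\otimes l}$. $\Omega$ is the category of finite ordinals $[l]=\{0,\dots,l-1\}$ and all functions, strict monoidal with $[l]\smile[m]=[l+m]$, $f\smile g(i)=f(i)$ for $i\in[l]$ and $g(i-l)+p$ for $i\in[m]+l$, unit $[0]$. $E[l]=\mathsf{R}^l$ and $Ef(x)_s=\sum_{r\in[l],f(r)=s}x_r$ for $f:[l]\to[m]$ (a functor $\Omega\to$ finite sets, injective on objects and morphisms). An $\Omega$ category is a Pro category $D\Omega$ with a strict monoidal isofunctor (stalk isofunctor) $D:\Omega\to D\Omega$; for $D$ injective on objects and morphisms, $D\Omega$ has objects $D[l]$, morphisms $Df$, composition $D(g\circ f)$, identities $D\,\mathrm{id}_{[l]}$, monoidal products $D[l]\smile D[m]=D([l]\smile[m])$, $Df\smile Dg=D(f\smile g)$, unit $D[0]$. *)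

theory Defs
  imports Complex_Main "HOL-Library.FuncSet"
begin

(* Omega: objects [l] = {0..<l} (represented by l :: nat); morphisms [l] -> [m] are
   extensional functions {..<l} ->E {..<m}. *)
definition Omega_hom :: "nat \<Rightarrow> nat \<Rightarrow> (nat \<Rightarrow> nat) set" where
  "Omega_hom l m = ({..<l} \<rightarrow>\<^sub>E {..<m})"

definition Omega_comp :: "nat \<Rightarrow> (nat \<Rightarrow> nat) \<Rightarrow> (nat \<Rightarrow> nat) \<Rightarrow> (nat \<Rightarrow> nat)" where
  "Omega_comp l g f = compose {..<l} g f"

definition Omega_id :: "nat \<Rightarrow> (nat \<Rightarrow> nat)" where
  "Omega_id l = restrict (\<lambda>i. i) {..<l}"

(* E[l] = R^l, as lists of length l *)
definition Evec :: "nat \<Rightarrow> 'r list set" where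
  "Evec l = {x. length x = l}"

definition Emap :: "nat \<Rightarrow> nat \<Rightarrow> (nat \<Rightarrow> nat) \<Rightarrow> 'r::comm_monoid_add list \<Rightarrow> 'r list" where
  "Emap l m f x = map (\<lambda>s. \<Sum>r\<in>{r. r < l \<and> f r = s}. x ! r) [0..<m]"

(* H_E[l] = H_1^{\<otimes> l}: complex functions on R^l (finite, since R is finite), i.e.
   C^(R^l) with orthonormal basis |x>, x in R^l, and standard inner product. *)
definition HE_obj :: "nat \<Rightarrow> ('r list \<Rightarrow> complex) set" where
  "HE_obj l = {v. \<forall>x. length x \<noteq> l \<longrightarrow> v x = 0}"

definition ket :: "'r list \<Rightarrow> ('r list \<Rightarrow> complex)" where
  "ket x = (\<lambda>y. if y = x then 1 else 0)"

definition HE_inner :: "nat \<Rightarrow> ('r::finite list \<Rightarrow> complex) \<Rightarrow> ('r list \<Rightarrow> complex) \<Rightarrow> complex" where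
  "HE_inner l v w = (\<Sum>x\<in>Evec l. cnj (v x) * w x)"

(* H_E f : the linear extension of |x> |-> |E f x> *)
definition HE_mor :: "nat \<Rightarrow> nat \<Rightarrow> (nat \<Rightarrow> nat) \<Rightarrow> ('r::{finite,comm_monoid_add} list \<Rightarrow> complex)
                        \<Rightarrow> ('r list \<Rightarrow> complex)" where
  "HE_mor l m f v = (\<lambda>y. if length y = m then (\<Sum>x\<in>{x \<in> Evec l. Emap l m f x = y}. v x) else 0)"

(* Morphisms of HH as triples (domain, codomain, map restricted to domain) *)
type_synonym 'r hmor = "('r list \<Rightarrow> complex) set \<times> ('r list \<Rightarrow> complex) set \<times> (('r list \<Rightarrow> complex) \<Rightarrow> ('r list \<Rightarrow> complex))"

definition HH_comp :: "'r hmor \<Rightarrow> 'r hmor \<Rightarrow> 'r hmor" where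
  "HH_comp \<psi> \<phi> = (fst \<phi>, fst (snd \<psi>), restrict (snd (snd \<psi>) \<circ> snd (snd \<phi>)) (fst \<phi>))"

definition HH_id :: "('r list \<Rightarrow> complex) set \<Rightarrow> 'r hmor" where
  "HH_id A = (A, A, restrict (\<lambda>v. v) A)"

definition clinear_on :: "('a \<Rightarrow> complex) set \<Rightarrow> (('a \<Rightarrow> complex) \<Rightarrow> ('b \<Rightarrow> complex)) \<Rightarrow> bool" where
  "clinear_on A F \<longleftrightarrow> (\<forall>v\<in>A. \<forall>w\<in>A. \<forall>c::complex.
       F (\<lambda>x. v x + w x) = (\<lambda>y. F v y + F w y) \<and> F (\<lambda>x. c * v x) = (\<lambda>y. c * F v y))"

definition HE_fun :: "nat \<Rightarrow> nat \<Rightarrow> (nat \<Rightarrow> nat) \<Rightarrow> ('r::{finite,comm_monoid_add}) hmor" where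
  "HE_fun l m f = (HE_obj l, HE_obj m, restrict (HE_mor l m f) (HE_obj l))"

end

theory Submission
  imports Defs
begin

lemma finite_Evec: "finite (Evec l :: 'r::finite list set)"
proof -
  have "Evec l = {xs :: 'r list. set xs \<subseteq> UNIV \<and> length xs = l}" by (auto simp: Evec_def)
  then show ?thesis using finite_lists_length_eq[of "UNIV :: 'r set" l] by simp
qed

lemma finite_Evec_P[simp]: "finite {x :: 'r::finite list. length x = l \<and> P x}"
  by (rule finite_subset[OF _ finite_Evec[of l]]) (auto simp: Evec_def)

lemma length_Emap[simp]: "length (Emap l m f x) = m"
  by (simp add: Emap_def)

lemma nth_Emap: "s < m \<Longrightarrow> Emap l m f x ! s = (\<Sum>r\<in>{r. r < l \<and> f r = s}. x ! r)"
  by (simp add: Emap_def)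

lemma Emap_comp:
  assumes f: "f \<in> Omega_hom l m" and g: "g \<in> Omega_hom m p"
  shows "Emap m p g (Emap l m f x) = Emap l p (Omega_comp l g f) x"
proof (rule nth_equalityI)
  show "length (Emap m p g (Emap l m f x)) = length (Emap l p (Omega_comp l g f) x)" by simp
next
  fix s assume "s < length (Emap m p g (Emap l m f x))"
  then have s: "s < p" by simp
  have fm: "\<And>r. r < l \<Longrightarrow> f r < m" using f by (auto simp: Omega_hom_def)
  have "Emap m p g (Emap l m f x) ! s = (\<Sum>t\<in>{t. t < m \<and> g t = s}. \<Sum>r\<in>{r. r < l \<and> f r = t}. x ! r)"
    using s by (simp add: nth_Emap)
  also have "\<dots> = (\<Sum>t\<in>{t. t < m \<and> g t = s}. \<Sum>r\<in>{r \<in> {r. r < l \<and> g (f r) = s}. f r = t}. x ! r)"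
    by (rule sum.cong) (auto intro!: sum.cong)
  also have "\<dots> = (\<Sum>r\<in>{r. r < l \<and> g (f r) = s}. x ! r)"
    by (rule sum.group) (auto simp: fm)
  also have "\<dots> = Emap l p (Omega_comp l g f) x ! s"
    using s by (simp add: nth_Emap Omega_comp_def compose_def) (rule sum.cong, auto)
  finally show "Emap m p g (Emap l m f x) ! s = Emap l p (Omega_comp l g f) x ! s" .
qed

lemma HE_mor_comp:
  assumes f: "f \<in> Omega_hom l m" and g: "g \<in> Omega_hom m p"
  shows "HE_mor m p g (HE_mor l m f v) = HE_mor l p (Omega_comp l g f) (v :: 'r::{finite,comm_monoid_add} list \<Rightarrow> complex)"
proof
  fix y :: "'r list"
  show "HE_mor m p g (HE_mor l m f v) y = HE_mor l p (Omega_comp l g f) v y"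
  proof (cases "length y = p")
    case True
    have "HE_mor m p g (HE_mor l m f v) y = (\<Sum>z\<in>{z \<in> Evec m. Emap m p g z = y}. \<Sum>x\<in>{x \<in> Evec l. Emap l m f x = z}. v x)"
      using True by (simp add: HE_mor_def Evec_def)
    also have "\<dots> = (\<Sum>z\<in>{z \<in> Evec m. Emap m p g z = y}. \<Sum>x\<in>{x \<in> {x \<in> Evec l. Emap l p (Omega_comp l g f) x = y}. Emap l m f x = z}. v x)"
      by (rule sum.cong) (auto simp: Emap_comp[OF f g, symmetric] intro!: sum.cong)
    also have "\<dots> = (\<Sum>x\<in>{x \<in> Evec l. Emap l p (Omega_comp l g f) x = y}. v x)"
      by (rule sum.group) (auto simp: finite_Evec Evec_def Emap_comp[OF f g, symmetric])
    finally show ?thesis using True by (simp add: HE_mor_def)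
  next
    case False then show ?thesis by (simp add: HE_mor_def)
  qed
qed

lemma Emap_id: "length x = l \<Longrightarrow> Emap l l (Omega_id l) x = x"
proof (rule nth_equalityI)
  fix s assume "length x = l" "s < length (Emap l l (Omega_id l) x)"
  then have s: "s < l" by simp
  have "{r. r < l \<and> Omega_id l r = s} = {s}" using s by (auto simp: Omega_id_def)
  then show "Emap l l (Omega_id l) x ! s = x ! s" using s by (simp add: nth_Emap)
qed simp

lemma HE_mor_id: "v \<in> HE_obj l \<Longrightarrow> HE_mor l l (Omega_id l) v = (v :: 'r::{finite,comm_monoid_add} list \<Rightarrow> complex)"
proof
  fix y :: "'r list" assume v: "v \<in> HE_obj l"
  show "HE_mor l l (Omega_id l) v y = v y"
  proof (cases "length y = l")
    case True
    have "{x \<in> Evec l. Emap l l (Omega_id l) x = y} = {y}" using True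
      by (auto simp: Evec_def Emap_id)
    then show ?thesis using True by (simp add: HE_mor_def)
  next
    case False then show ?thesis using v by (simp add: HE_mor_def HE_obj_def)
  qed
qed

lemma HE_mor_ket: "x \<in> Evec l \<Longrightarrow> HE_mor l m f (ket x) = ket (Emap l m f x :: 'r::{finite,comm_monoid_add} list)"
proof
  fix y :: "'r list" assume x: "x \<in> Evec l"
  have "(\<Sum>x'\<in>{x' \<in> Evec l. Emap l m f x' = y}. ket x x') = (if x \<in> {x' \<in> Evec l. Emap l m f x' = y} then 1 else 0)"
    unfolding ket_def by (subst sum.delta) (auto simp: Evec_def)
  then show "HE_mor l m f (ket x) y = ket (Emap l m f x) y"
    using x by (auto simp: HE_mor_def ket_def)
qed

lemma ket_in: "ket x \<in> HE_obj (length x)"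
  by (auto simp: ket_def HE_obj_def)

lemma ket_inj: "ket x = ket y \<Longrightarrow> x = y"
  by (metis ket_def zero_neq_one)

lemma HE_fun_comp:
  assumes f: "f \<in> Omega_hom l m" and g: "g \<in> Omega_hom m p"
  shows "(HE_fun l p (Omega_comp l g f) :: ('r::{finite,comm_monoid_add}) hmor) = HH_comp (HE_fun m p g) (HE_fun l m f)"
proof -
  have im: "HE_mor l m f v \<in> HE_obj m" for v :: "'r list \<Rightarrow> complex"
    by (auto simp: HE_mor_def HE_obj_def)
  show ?thesis
    unfolding HE_fun_def HH_comp_def
    by (auto simp: im HE_mor_comp[OF f g] intro!: restrict_ext)
qed

lemma Omega_comp_hom: "f \<in> Omega_hom l m \<Longrightarrow> g \<in> Omega_hom m p \<Longrightarrow> Omega_comp l g f \<in> Omega_hom l p"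
  by (auto simp: Omega_hom_def Omega_comp_def compose_def PiE_iff)

lemma Omega_id_hom: "Omega_id l \<in> Omega_hom l l"
  by (auto simp: Omega_hom_def Omega_id_def)

lemma HE_fun_id: "(HE_fun l l (Omega_id l) :: ('r::{finite,comm_monoid_add}) hmor) = HH_id (HE_obj l)"
  unfolding HE_fun_def HH_id_def by (auto simp: HE_mor_id intro!: restrict_ext)

lemma HE_obj_inj: "inj (HE_obj :: nat \<Rightarrow> ('r list \<Rightarrow> complex) set)"
proof (rule injI)
  fix l l' assume e: "(HE_obj l :: ('r list \<Rightarrow> complex) set) = HE_obj l'"
  have "ket (replicate l (undefined::'r)) \<in> HE_obj l" using ket_in[of "replicate l (undefined::'r)"] by simp
  then have "ket (replicate l (undefined::'r)) \<in> HE_obj l'" using e by simp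
  then show "l = l'" by (auto simp: HE_obj_def ket_def split: if_splits)
qed

lemma HE_fun_inj:
  assumes nontriv: "\<exists>z::'r::{finite,comm_monoid_add}. z \<noteq> 0"
  shows "inj_on (\<lambda>(l, m, f). (HE_fun l m f :: 'r hmor)) {(l, m, f). f \<in> Omega_hom l m}"
proof (rule inj_onI, clarsimp)
  fix l m f l' m' f'
  assume f: "f \<in> Omega_hom l m" and f': "f' \<in> Omega_hom l' m'"
    and e: "(HE_fun l m f :: 'r hmor) = HE_fun l' m' f'"
  obtain z :: 'r where z: "z \<noteq> 0" using nontriv by blast
  have ll: "l = l'" and mm: "m = m'" using e HE_obj_inj
    by (auto simp: HE_fun_def inj_def)
  have er: "restrict (HE_mor l m f) (HE_obj l) = (restrict (HE_mor l m f') (HE_obj l) :: ('r list \<Rightarrow> complex) \<Rightarrow> _)"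
    using e ll mm by (simp add: HE_fun_def)
  have "f r = f' r" if r: "r < l" for r
  proof (rule ccontr)
    assume ne: "f r \<noteq> f' r"
    define x where "x = (replicate l (0::'r))[r := z]"
    have lx: "length x = l" by (simp add: x_def)
    have xn: "\<And>r'. r' < l \<Longrightarrow> x ! r' = (if r' = r then z else 0)" using r
      by (auto simp: x_def nth_list_update)
    have "HE_mor l m f (ket x) = HE_mor l m f' (ket x)"
      using fun_cong[OF er, of "ket x"] ket_in[of x] lx by simp
    then have "Emap l m f x = Emap l m f' x"
      using lx by (auto simp: HE_mor_ket Evec_def dest: ket_inj)
    moreover have fr: "f r < m" using f r by (auto simp: Omega_hom_def)
    have "Emap l m f x ! f r = z"
    proof -
      have "Emap l m f x ! f r = (\<Sum>r'\<in>{r'. r' < l \<and> f r' = f r}. if r' = r then z else 0)"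
        using fr xn by (simp add: nth_Emap)
      also have "\<dots> = z" by (subst sum.delta) (auto simp: r)
      finally show ?thesis .
    qed
    moreover have "Emap l m f' x ! f r = 0"
    proof -
      have "Emap l m f' x ! f r = (\<Sum>r'\<in>{r'. r' < l \<and> f' r' = f r}. if r' = r then z else 0)"
        using fr xn by (simp add: nth_Emap)
      also have "\<dots> = 0" by (subst sum.delta) (auto simp: ne[symmetric])
      finally show ?thesis .
    qed
    ultimately show False using z by simp
  qed
  then have "f = f'" using f f' ll mm
    by (intro extensionalityI[of f "{..<l}" f']) (auto simp: Omega_hom_def PiE_iff)
  then show "l = l' \<and> m = m' \<and> f = f'" using ll mm by simp
qed

theorem proposition4p6:
  assumes nontriv: "\<exists>z::'r::{finite,comm_monoid_add}. z \<noteq> 0"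
  shows
    \<comment> \<open>(b) H_E f is a morphism H_E[l] -> H_E[m] of HH with H_E f |x> = |E f x>\<close>
    "(\<forall>l m f. f \<in> Omega_hom l m \<longrightarrow>
        HE_mor l m f ` HE_obj l \<subseteq> (HE_obj m :: ('r list \<Rightarrow> complex) set)
      \<and> clinear_on (HE_obj l :: ('r list \<Rightarrow> complex) set) (HE_mor l m f)
      \<and> (\<forall>x::'r list. x \<in> Evec l \<longrightarrow> HE_mor l m f (ket x) = ket (Emap l m f x)))
   \<comment> \<open>functoriality: composition\<close>
   \<and> (\<forall>l m p f g. f \<in> Omega_hom l m \<longrightarrow> g \<in> Omega_hom m p \<longrightarrow>
        (HE_fun l p (Omega_comp l g f) :: 'r hmor) = HH_comp (HE_fun m p g) (HE_fun l m f))
   \<comment> \<open>functoriality: identities\<close>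
   \<and> (\<forall>l. (HE_fun l l (Omega_id l) :: 'r hmor) = HH_id (HE_obj l))
   \<comment> \<open>injective on objects\<close>
   \<and> inj (HE_obj :: nat \<Rightarrow> ('r list \<Rightarrow> complex) set)
   \<comment> \<open>injective on morphisms\<close>
   \<and> inj_on (\<lambda>(l, m, f). (HE_fun l m f :: 'r hmor)) {(l, m, f). f \<in> Omega_hom l m}
   \<comment> \<open>the image H_E Omega is a subcategory of HH: closed under composition and identities\<close>
   \<and> (\<forall>\<phi>\<in>{HE_fun l m f | l m f. f \<in> Omega_hom l m}. \<forall>\<psi>\<in>{HE_fun l m f | l m f. f \<in> Omega_hom l m}.
        fst (snd \<phi>) = fst \<psi> \<longrightarrow>
        (HH_comp \<psi> \<phi> :: 'r hmor) \<in> {HE_fun l m f | l m f. f \<in> Omega_hom l m})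
   \<and> (\<forall>l. (HH_id (HE_obj l) :: 'r hmor) \<in> {HE_fun l' m f | l' m f. f \<in> Omega_hom l' m})"
proof (intro conjI allI impI ballI)
  fix l m f assume "f \<in> Omega_hom l m"
  show "HE_mor l m f ` HE_obj l \<subseteq> (HE_obj m :: ('r list \<Rightarrow> complex) set)"
    by (auto simp: HE_mor_def HE_obj_def)
  show "clinear_on (HE_obj l :: ('r list \<Rightarrow> complex) set) (HE_mor l m f)"
    by (auto simp: clinear_on_def HE_mor_def sum.distrib sum_distrib_left)
  fix x :: "'r list" assume "x \<in> Evec l"
  then show "HE_mor l m f (ket x) = ket (Emap l m f x)"
    by (rule HE_mor_ket)
next
  fix l m p f g assume "f \<in> Omega_hom l m" "g \<in> Omega_hom m p"
  then show "(HE_fun l p (Omega_comp l g f) :: 'r hmor) = HH_comp (HE_fun m p g) (HE_fun l m f)"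
    by (rule HE_fun_comp)
next
  fix l show "(HE_fun l l (Omega_id l) :: 'r hmor) = HH_id (HE_obj l)" by (rule HE_fun_id)
next
  show "inj (HE_obj :: nat \<Rightarrow> ('r list \<Rightarrow> complex) set)" by (rule HE_obj_inj)
next
  show "inj_on (\<lambda>(l, m, f). (HE_fun l m f :: 'r hmor)) {(l, m, f). f \<in> Omega_hom l m}"
    using nontriv by (rule HE_fun_inj)
next
  fix \<phi> \<psi> :: "'r hmor" assume p: "\<phi> \<in> {HE_fun l m f | l m f. f \<in> Omega_hom l m}"
    and q: "\<psi> \<in> {HE_fun l m f | l m f. f \<in> Omega_hom l m}"
    and e: "fst (snd \<phi>) = fst \<psi>"
  obtain l m f where \<phi>: "\<phi> = HE_fun l m f" and f: "f \<in> Omega_hom l m" using p by blast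
  obtain l' m' g where \<psi>: "\<psi> = HE_fun l' m' g" and g: "g \<in> Omega_hom l' m'" using q by blast
  have "fst (snd \<phi>) = HE_obj m" "fst \<psi> = HE_obj l'" unfolding \<phi> \<psi> HE_fun_def by simp_all
  then have "m = l'" using e HE_obj_inj unfolding inj_def by metis
  then have g': "g \<in> Omega_hom m m'" using g by simp
  have "(HH_comp \<psi> \<phi> :: 'r hmor) = HE_fun l m' (Omega_comp l g f)"
    unfolding \<phi> \<psi> \<open>m = l'\<close>[symmetric] by (rule HE_fun_comp[OF f g', symmetric])
  then show "(HH_comp \<psi> \<phi> :: 'r hmor) \<in> {HE_fun l m f | l m f. f \<in> Omega_hom l m}"
    using Omega_comp_hom[OF f] g \<open>m = l'\<close> by blast
next
  fix l show "(HH_id (HE_obj l) :: 'r hmor) \<in> {HE_fun l' m f | l' m f. f \<in> Omega_hom l' m}"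
    using HE_fun_id[of l, where 'r='r] Omega_id_hom[of l] by (metis (mono_tags, lifting) mem_Collect_eq)
qed

end
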